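(* Let $G$ be a group containing an element of infinite order, and suppose $G$ acts on a Smale space $(X,\varphi)$. Then the action of $G$ is not free.
   Context: A Smale space $(X,\varphi)$ is an infinite compact metric space $(X,d)$ with a homeomorphism $\varphi:X\to X$ for which there exist constants $\epsilon_X>0$, $0<\lambda_X<1$ and a map $[\cdot,\cdot]$ defined on pairs $(x,y)$ with $d(x,y)<\epsilon_X$ such that, whenever both sides are defined, $[x,x]=x$, $[x,[y,z]]=[x,z]$, $[[x,y],z]=[x,z]$, $\varphi([x,y])=[\varphi(x),\varphi(y)]$, and moreover $d(\varphi(x),\varphi(y))\le\lambda_X d(x,y)$ whenever $[x,y]=y$, and $d(\varphi^{-1}(x),\varphi^{-1}(y))\le\lambda_X d(x,y)$ whenever $[x,y]=x$. An action of a group $G$ on $(X,\varphi)$ is a (continuous) homomorphism $G\to\mathrm{Homeo}(X)$, $g\mapsto(x\mapsto gx)$, such that $g\varphi(x)=\varphi(gx)$ for all $x\in X$, $g\in G$. The action is free if for every $x\in X$, $gx=x$ implies $g=e$. *)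

theory Defs
  imports "HOL-Analysis.Analysis" "HOL-Algebra.Multiplicative_Group"
begin

text \<open>The bracket br is a total function on the type, but only its values on the
  domain {(x,y) in X x X. dist x y < eps} matter; the axioms are imposed
  "whenever both sides are defined".\<close>

definition smale_space :: "'a::metric_space set \<Rightarrow> ('a \<Rightarrow> 'a) \<Rightarrow> bool" where
  "smale_space X \<phi> \<longleftrightarrow>
     compact X \<and> infinite X \<and> (\<exists>\<psi>. homeomorphism X X \<phi> \<psi>) \<and>
     (\<exists>\<epsilon>::real. \<epsilon> > 0 \<and> (\<exists>lam::real. 0 < lam \<and> lam < 1 \<and>
       (\<exists>br :: 'a \<Rightarrow> 'a \<Rightarrow> 'a.
          (\<forall>x\<in>X. \<forall>y\<in>X. dist x y < \<epsilon> \<longrightarrow> br x y \<in> X) \<and>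
          continuous_on {(x, y). x \<in> X \<and> y \<in> X \<and> dist x y < \<epsilon>} (\<lambda>p. br (fst p) (snd p)) \<and>
          (\<forall>x\<in>X. br x x = x) \<and>
          (\<forall>x\<in>X. \<forall>y\<in>X. \<forall>z\<in>X. dist y z < \<epsilon> \<and> dist x (br y z) < \<epsilon> \<and> dist x z < \<epsilon>
              \<longrightarrow> br x (br y z) = br x z) \<and>
          (\<forall>x\<in>X. \<forall>y\<in>X. \<forall>z\<in>X. dist x y < \<epsilon> \<and> dist (br x y) z < \<epsilon> \<and> dist x z < \<epsilon>
              \<longrightarrow> br (br x y) z = br x z) \<and>
          (\<forall>x\<in>X. \<forall>y\<in>X. dist x y < \<epsilon> \<and> dist (\<phi> x) (\<phi> y) < \<epsilon>
              \<longrightarrow> \<phi> (br x y) = br (\<phi> x) (\<phi> y)) \<and>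
          (\<forall>x\<in>X. \<forall>y\<in>X. dist x y < \<epsilon> \<and> br x y = y
              \<longrightarrow> dist (\<phi> x) (\<phi> y) \<le> lam * dist x y) \<and>
          (\<forall>x\<in>X. \<forall>y\<in>X. dist x y < \<epsilon> \<and> br x y = x
              \<longrightarrow> dist (inv_into X \<phi> x) (inv_into X \<phi> y) \<le> lam * dist x y))))"

definition smale_action ::
  "('g, 'b) monoid_scheme \<Rightarrow> 'a::metric_space set \<Rightarrow> ('a \<Rightarrow> 'a) \<Rightarrow> ('g \<Rightarrow> 'a \<Rightarrow> 'a) \<Rightarrow> bool" where
  "smale_action G X \<phi> act \<longleftrightarrow>
     (\<forall>g\<in>carrier G. \<exists>h. homeomorphism X X (act g) h) \<and>
     (\<forall>x\<in>X. act \<one>\<^bsub>G\<^esub> x = x) \<and>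
     (\<forall>g\<in>carrier G. \<forall>h\<in>carrier G. \<forall>x\<in>X. act (g \<otimes>\<^bsub>G\<^esub> h) x = act g (act h x)) \<and>
     (\<forall>g\<in>carrier G. \<forall>x\<in>X. act g (\<phi> x) = \<phi> (act g x))"

definition free_action :: "('g, 'b) monoid_scheme \<Rightarrow> 'a set \<Rightarrow> ('g \<Rightarrow> 'a \<Rightarrow> 'a) \<Rightarrow> bool" where
  "free_action G X act \<longleftrightarrow> (\<forall>x\<in>X. \<forall>g\<in>carrier G. act g x = x \<longrightarrow> g = \<one>\<^bsub>G\<^esub>)"

end

theory Submission imports Defs begin

locale sm =
  fixes X :: "'a::metric_space set" and f :: "'a \<Rightarrow> 'a" and \<epsilon> lam :: real and br :: "'a \<Rightarrow> 'a \<Rightarrow> 'a"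
  assumes cX: "compact X" and neX: "X \<noteq> {}" and fXX: "f ` X = X" and injf: "inj_on f X"
    and contf: "continuous_on X f" and epos: "\<epsilon> > 0" and lpos: "0 < lam" and l1: "lam < 1"
    and brX: "\<forall>x\<in>X. \<forall>y\<in>X. dist x y < \<epsilon> \<longrightarrow> br x y \<in> X"
    and brc: "continuous_on {(x, y). x \<in> X \<and> y \<in> X \<and> dist x y < \<epsilon>} (\<lambda>p. br (fst p) (snd p))"
    and brxx: "\<forall>x\<in>X. br x x = x"
    and ax1: "\<forall>x\<in>X. \<forall>y\<in>X. \<forall>z\<in>X. dist y z < \<epsilon> \<and> dist x (br y z) < \<epsilon> \<and> dist x z < \<epsilon>
              \<longrightarrow> br x (br y z) = br x z"
    and ax2: "\<forall>x\<in>X. \<forall>y\<in>X. \<forall>z\<in>X. dist x y < \<epsilon> \<and> dist (br x y) z < \<epsilon> \<and> dist x z < \<epsilon>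
              \<longrightarrow> br (br x y) z = br x z"
    and ax3: "\<forall>x\<in>X. \<forall>y\<in>X. dist x y < \<epsilon> \<and> dist (f x) (f y) < \<epsilon>
              \<longrightarrow> f (br x y) = br (f x) (f y)"
    and ax4: "\<forall>x\<in>X. \<forall>y\<in>X. dist x y < \<epsilon> \<and> br x y = y
              \<longrightarrow> dist (f x) (f y) \<le> lam * dist x y"
    and ax5: "\<forall>x\<in>X. \<forall>y\<in>X. dist x y < \<epsilon> \<and> br x y = x
              \<longrightarrow> dist (inv_into X f x) (inv_into X f y) \<le> lam * dist x y"
begin

lemma fX: "x \<in> X \<Longrightarrow> f x \<in> X" using fXX by auto

lemma fpX: "x \<in> X \<Longrightarrow> (f ^^ m) x \<in> X"
  by (induction m) (auto simp: fX)

lemma fp_inj: "x \<in> X \<Longrightarrow> y \<in> X \<Longrightarrow> (f ^^ m) x = (f ^^ m) y \<Longrightarrow> x = y"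
proof (induction m arbitrary: x y)
  case (Suc m)
  have "f ((f ^^ m) x) = f ((f ^^ m) y)" using Suc.prems by simp
  moreover have "(f ^^ m) x \<in> X" "(f ^^ m) y \<in> X" using fpX Suc.prems by auto
  ultimately have "(f ^^ m) x = (f ^^ m) y" using injf unfolding inj_on_def by blast
  then show ?case using Suc.IH[of "x" "y"] Suc.prems by simp
qed simp

lemma fp_surj: "y \<in> X \<Longrightarrow> \<exists>x\<in>X. (f ^^ m) x = y"
proof (induction m arbitrary: y)
  case (Suc m)
  then obtain x where "x \<in> X" "(f ^^ m) x = y" by blast
  moreover have "x \<in> f ` X" using fXX \<open>x \<in> X\<close> by simp
  then obtain w where "w \<in> X" "f w = x" by (auto elim!: imageE)
  ultimately have "(f ^^ Suc m) w = y" by (simp only: funpow_Suc_right o_apply)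
  then show ?case using \<open>w \<in> X\<close> by blast
qed auto

lemma contfp: "continuous_on X (f ^^ m)"
proof (induction m)
  case 0 then show ?case by (simp add: continuous_on_id)
next
  case (Suc m)
  have "continuous_on X (f \<circ> (f ^^ m))"
  proof (rule continuous_on_compose[OF Suc])
    have "(f^^m) ` X \<subseteq> X" using fpX by blast
    then show "continuous_on ((f^^m) ` X) f" using continuous_on_subset[OF contf] by blast
  qed
  then show ?case by simp
qed

lemma brX': "x \<in> X \<Longrightarrow> y \<in> X \<Longrightarrow> dist x y < \<epsilon> \<Longrightarrow> br x y \<in> X" using brX by blast

lemma equiv1: "x \<in> X \<Longrightarrow> y \<in> X \<Longrightarrow> dist x y < \<epsilon> \<Longrightarrow> dist (f x) (f y) < \<epsilon> \<Longrightarrow> f (br x y) = br (f x) (f y)"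
  using ax3[rule_format, of x y] by simp

lemma equivm: "x \<in> X \<Longrightarrow> y \<in> X \<Longrightarrow> (\<forall>i\<le>m. dist ((f^^i) x) ((f^^i) y) < \<epsilon>) \<Longrightarrow>
   (f^^m) (br x y) = br ((f^^m) x) ((f^^m) y)"
proof (induction m)
  case 0 then show ?case by simp
next
  case (Suc m)
  then have "(f^^m) (br x y) = br ((f^^m) x) ((f^^m) y)" by auto
  moreover have "dist ((f^^m) x) ((f^^m) y) < \<epsilon>" "dist ((f^^Suc m) x) ((f^^Suc m) y) < \<epsilon>"
    using Suc.prems by auto
  ultimately show ?case using equiv1[of "(f^^m) x" "(f^^m) y"] fpX Suc.prems by simp
qed

lemma Sm: "x \<in> X \<Longrightarrow> y \<in> X \<Longrightarrow> br x y = y \<Longrightarrow> dist x y < \<epsilon> \<Longrightarrow>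
   br ((f^^m) x) ((f^^m) y) = (f^^m) y \<and> dist ((f^^m) x) ((f^^m) y) \<le> lam^m * dist x y"
proof (induction m)
  case 0 then show ?case by simp
next
  case (Suc m)
  let ?a = "(f^^m) x" and ?b = "(f^^m) y"
  have IH: "br ?a ?b = ?b" "dist ?a ?b \<le> lam^m * dist x y" using Suc by auto
  have "lam^m * dist x y \<le> 1 * dist x y"
    by (intro mult_right_mono) (use lpos l1 in \<open>auto intro: power_le_one\<close>)
  then have d: "dist ?a ?b < \<epsilon>" using IH Suc.prems by linarith
  have X: "?a \<in> X" "?b \<in> X" using fpX Suc.prems by auto
  have c: "dist (f ?a) (f ?b) \<le> lam * dist ?a ?b" using ax4[rule_format, of ?a ?b] X d IH by simp
  also have "\<dots> \<le> lam * (lam^m * dist x y)" using IH lpos by (simp add: mult_left_mono)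
  finally have c2: "dist (f ?a) (f ?b) \<le> lam^Suc m * dist x y" by (simp add: mult.assoc)
  have "lam * dist ?a ?b \<le> dist ?a ?b" using mult_left_le_one_le[of "dist ?a ?b" lam] lpos l1 by simp
  then have "dist (f ?a) (f ?b) < \<epsilon>" using c d by linarith
  then have "f (br ?a ?b) = br (f ?a) (f ?b)" using equiv1[of ?a ?b] X d by simp
  then show ?case using IH c2 by simp
qed

lemma U1: "a \<in> X \<Longrightarrow> b \<in> X \<Longrightarrow> br (f a) (f b) = f a \<Longrightarrow> dist (f a) (f b) < \<epsilon> \<Longrightarrow>
   br a b = a \<and> dist a b \<le> lam * dist (f a) (f b)"
proof -
  assume a: "a \<in> X" and b: "b \<in> X" and h: "br (f a) (f b) = f a" and d: "dist (f a) (f b) < \<epsilon>"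
  have "dist (inv_into X f (f a)) (inv_into X f (f b)) \<le> lam * dist (f a) (f b)"
    using ax5[rule_format, of "f a" "f b"] fX a b h d by simp
  then have c: "dist a b \<le> lam * dist (f a) (f b)" using injf a b by (simp add: inv_into_f_f)
  moreover have "lam * dist (f a) (f b) \<le> dist (f a) (f b)" using mult_left_le_one_le[of "dist (f a) (f b)" lam] lpos l1 by simp
  ultimately have "dist a b < \<epsilon>" using d by linarith
  then have "f (br a b) = f a" using equiv1 a b d h by simp
  then have "br a b = a" using injf brX' a b \<open>dist a b < \<epsilon>\<close> by (auto simp: inj_on_def)
  then show ?thesis using c by simp
qed

lemma Um: "a \<in> X \<Longrightarrow> b \<in> X \<Longrightarrow> br ((f^^m) a) ((f^^m) b) = (f^^m) a \<Longrightarrow> dist ((f^^m) a) ((f^^m) b) < \<epsilon> \<Longrightarrow>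
   br a b = a \<and> dist a b \<le> lam^m * dist ((f^^m) a) ((f^^m) b)"
proof (induction m arbitrary: a b)
  case 0 then show ?case by simp
next
  case (Suc m)
  have e: "(f^^Suc m) a = (f^^m) (f a)" "(f^^Suc m) b = (f^^m) (f b)" by (simp_all only: funpow_Suc_right o_apply)
  have IH: "br (f a) (f b) = f a \<and> dist (f a) (f b) \<le> lam^m * dist ((f^^Suc m) a) ((f^^Suc m) b)"
    using Suc.IH[of "f a" "f b"] Suc.prems fX e by auto
  have "lam^m * dist ((f^^Suc m) a) ((f^^Suc m) b) \<le> 1 * dist ((f^^Suc m) a) ((f^^Suc m) b)"
    by (intro mult_right_mono) (use lpos l1 in \<open>auto intro: power_le_one\<close>)
  then have "dist (f a) (f b) < \<epsilon>" using IH Suc.prems by linarith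
  then have "br a b = a \<and> dist a b \<le> lam * dist (f a) (f b)" using U1[of a b] Suc.prems IH by simp
  moreover have "lam * dist (f a) (f b) \<le> lam * (lam^m * dist ((f^^Suc m) a) ((f^^Suc m) b))"
    using IH lpos by (simp add: mult_left_mono)
  ultimately show ?case by (simp add: mult.assoc)
qed

lemma bb1: "x \<in> X \<Longrightarrow> y \<in> X \<Longrightarrow> dist x y < \<epsilon> \<Longrightarrow> dist x (br x y) < \<epsilon> \<Longrightarrow> br x (br x y) = br x y"
  using ax1[rule_format, of x x y] by simp

lemma bb2: "x \<in> X \<Longrightarrow> y \<in> X \<Longrightarrow> dist x y < \<epsilon> \<Longrightarrow> dist (br x y) y < \<epsilon> \<Longrightarrow> br (br x y) y = br x y"
  using ax2[rule_format, of x y y] by simp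

lemma utrans: "u \<in> X \<Longrightarrow> a \<in> X \<Longrightarrow> b \<in> X \<Longrightarrow> br u a = u \<Longrightarrow> br a b = a \<Longrightarrow> dist u a < \<epsilon> \<Longrightarrow>
  dist a b < \<epsilon> \<Longrightarrow> dist u b < \<epsilon> \<Longrightarrow> br u b = u"
proof -
  assume h: "u \<in> X" "a \<in> X" "b \<in> X" "br u a = u" "br a b = a" "dist u a < \<epsilon>" "dist a b < \<epsilon>" "dist u b < \<epsilon>"
  then have "br u (br a b) = br u b" using ax1[rule_format, of u a b] by simp
  then show ?thesis using h by simp
qed

lemma modulus: "\<rho> > 0 \<Longrightarrow> \<exists>\<eta>>0. \<eta> < \<epsilon> \<and> \<eta> \<le> \<rho> \<and> (\<forall>a\<in>X. \<forall>b\<in>X. dist a b \<le> \<eta> \<longrightarrow> dist (br a b) a \<le> \<rho>)"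
proof -
  assume rho: "\<rho> > 0"
  let ?K = "(X \<times> X) \<inter> {p. dist (fst p) (snd p) \<le> \<epsilon>/2}"
  have "closed {p::'a\<times>'a. dist (fst p) (snd p) \<le> \<epsilon>/2}"
    by (intro closed_Collect_le continuous_on_dist continuous_on_fst continuous_on_snd continuous_on_const continuous_on_id)
  then have cK: "compact ?K" using cX by (intro compact_Int_closed compact_Times) auto
  have "?K \<subseteq> {(x, y). x \<in> X \<and> y \<in> X \<and> dist x y < \<epsilon>}" using epos by auto
  then have "continuous_on ?K (\<lambda>p. br (fst p) (snd p))" using brc continuous_on_subset by blast
  then have "uniformly_continuous_on ?K (\<lambda>p. br (fst p) (snd p))"
    using cK compact_uniformly_continuous by blast
  then have "\<exists>d>0. \<forall>x\<in>?K. \<forall>x'\<in>?K. dist x' x < d \<longrightarrow> dist (br (fst x') (snd x')) (br (fst x) (snd x)) < \<rho>"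
    using rho unfolding uniformly_continuous_on_def by blast
  then obtain d0 where d0: "d0 > 0" and
    uc: "\<forall>x\<in>?K. \<forall>x'\<in>?K. dist x' x < d0 \<longrightarrow> dist (br (fst x') (snd x')) (br (fst x) (snd x)) < \<rho>"
    by blast
  define \<eta> where "\<eta> = min (d0/2) (min (\<epsilon>/4) \<rho>)"
  have "\<eta> > 0" using d0 epos rho by (simp add: \<eta>_def)
  moreover have "\<eta> < \<epsilon>" "\<eta> \<le> \<rho>" using epos by (auto simp: \<eta>_def)
  moreover have "\<forall>a\<in>X. \<forall>b\<in>X. dist a b \<le> \<eta> \<longrightarrow> dist (br a b) a \<le> \<rho>"
  proof (intro ballI impI)
    fix a b assume a: "a \<in> X" and b: "b \<in> X" and d: "dist a b \<le> \<eta>"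
    have k1: "(a, b) \<in> ?K" using a b d epos by (auto simp: \<eta>_def)
    have k2: "(a, a) \<in> ?K" using a epos by auto
    have "dist (a, b) (a, a) = dist a b" by (simp add: dist_Pair_Pair dist_commute)
    then have "dist (a, b) (a, a) < d0" using d d0 by (simp add: \<eta>_def)
    then have "dist (br a b) (br a a) < \<rho>" using uc[rule_format, OF k2 k1] by simp
    then show "dist (br a b) a \<le> \<rho>" using brxx a by simp
  qed
  ultimately show ?thesis by (intro exI[of _ \<eta>]) simp
qed


lemma le1: "lam^j \<le> 1" using lpos l1 by (simp add: power_le_one)
lemma ge0: "lam^j \<ge> 0" using lpos by simp

lemma expansive: "\<exists>c>0. \<forall>u\<in>X. \<forall>v\<in>X. \<forall>M. (\<forall>m\<le>2*M. dist ((f^^m) u) ((f^^m) v) \<le> c)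
    \<longrightarrow> dist ((f^^M) u) ((f^^M) v) \<le> \<epsilon> * lam^M"
proof -
  define R where "R = \<epsilon>/8"
  have R0: "R > 0" using epos by (simp add: R_def)
  obtain c where c: "c > 0" "c < \<epsilon>" "c \<le> R" and cm: "\<forall>a\<in>X. \<forall>b\<in>X. dist a b \<le> c \<longrightarrow> dist (br a b) a \<le> R"
    using modulus[OF R0] by blast
  show ?thesis
  proof (intro exI[of _ c] conjI ballI allI impI)
    show "c > 0" using c by simp
    fix u v M assume uX: "u \<in> X" and vX: "v \<in> X" and H: "\<forall>m\<le>2*M. dist ((f^^m) u) ((f^^m) v) \<le> c"
    define a where "a = (f^^M) u"
    define b where "b = (f^^M) v"
    have aX: "a \<in> X" and bX: "b \<in> X" using fpX uX vX by (auto simp: a_def b_def)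
    have dab: "dist a b \<le> c" using H by (auto simp: a_def b_def)
    define z where "z = br a b"
    have zX: "z \<in> X" using brX' aX bX dab c by (simp add: z_def)
    have dza: "dist z a \<le> R" using cm aX bX dab by (simp add: z_def)
    have Re: "R < \<epsilon>" "2*R < \<epsilon>" "3*R < \<epsilon>" "5*R \<le> \<epsilon>" using epos by (auto simp: R_def)
    have daz: "dist a z < \<epsilon>" using dza Re by (simp add: dist_commute)
    have zs: "br a z = z" using bb1[OF aX bX] dab c daz by (simp add: z_def)
    have "dist z b \<le> dist z a + dist a b" by (rule dist_triangle)
    then have dzb: "dist z b < \<epsilon>" using dza dab c Re by linarith
    have zu: "br z b = z" using bb2[OF aX bX] dab c dzb by (simp add: z_def)
    have fw: "br ((f^^j) a) ((f^^j) z) = (f^^j) z \<and> dist ((f^^j) a) ((f^^j) z) \<le> lam^j * dist a z" for j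
      using Sm[OF aX zX zs daz] .
    have dj: "dist ((f^^j) z) ((f^^j) b) \<le> R + c" if "j \<le> M" for j
    proof -
      have "dist ((f^^j) z) ((f^^j) b) \<le> dist ((f^^j) a) ((f^^j) z) + dist ((f^^j) a) ((f^^j) b)"
        by (rule dist_triangle3)
      moreover have "lam^j * dist a z \<le> 1 * dist a z" by (rule mult_right_mono[OF le1]) simp
      moreover have "(f^^j) a = (f^^(j+M)) u" "(f^^j) b = (f^^(j+M)) v"
        by (simp_all add: a_def b_def funpow_add)
      moreover have "dist ((f^^(j+M)) u) ((f^^(j+M)) v) \<le> c" using H that by simp
      ultimately show ?thesis using fw[of j] dza by (simp add: dist_commute)
    qed
    have djl: "\<forall>i\<le>M. dist ((f^^i) z) ((f^^i) b) < \<epsilon>"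
    proof (intro allI impI)
      fix i assume "i \<le> M" then show "dist ((f^^i) z) ((f^^i) b) < \<epsilon>" using dj[of i] c Re by linarith
    qed
    have "(f^^M) (br z b) = br ((f^^M) z) ((f^^M) b)" using equivm[OF zX bX djl] .
    then have e1: "br ((f^^M) z) ((f^^M) b) = (f^^M) z" using zu by simp
    have "br z b = z \<and> dist z b \<le> lam^M * dist ((f^^M) z) ((f^^M) b)"
      using Um[OF zX bX e1] djl by simp
    then have dzb2: "dist z b \<le> lam^M * (2*R)"
      using dj[of M] c mult_left_mono[OF _ ge0, of "dist ((f^^M) z) ((f^^M) b)" "2*R" M] by linarith
    obtain z0 where z0X: "z0 \<in> X" and z0: "(f^^M) z0 = z" using fp_surj zX by blast
    have e2: "br ((f^^M) z0) ((f^^M) v) = (f^^M) z0" using z0 zu by (simp add: b_def)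
    have dj3: "dist ((f^^j) z0) ((f^^j) v) \<le> 2*R" if "j \<le> M" for j
    proof -
      have q: "(f^^(M-j)) ((f^^j) p) = (f^^M) p" for p
      proof -
        have "(f^^M) p = (f^^((M-j)+j)) p" using that by simp
        also have "\<dots> = (f^^(M-j)) ((f^^j) p)" by (simp only: funpow_add o_apply)
        finally show ?thesis by simp
      qed
      have "br ((f^^(M-j)) ((f^^j) z0)) ((f^^(M-j)) ((f^^j) v)) = (f^^(M-j)) ((f^^j) z0)"
        using e2 q by simp
      moreover have "dist ((f^^(M-j)) ((f^^j) z0)) ((f^^(M-j)) ((f^^j) v)) < \<epsilon>"
        using q dzb z0 by (simp add: b_def)
      ultimately have "dist ((f^^j) z0) ((f^^j) v) \<le> lam^(M-j) * dist z b"
        using Um[of "(f^^j) z0" "(f^^j) v" "M-j"] fpX z0X vX q z0 by (simp add: b_def)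
      also have "\<dots> \<le> 1 * dist z b" by (rule mult_right_mono[OF le1]) simp
      also have "\<dots> \<le> 2*R"
      proof -
        have "lam^M * (2*R) \<le> 1 * (2*R)" by (rule mult_right_mono[OF le1]) (use R0 in simp)
        then show ?thesis using dzb2 by simp
      qed
      finally show ?thesis .
    qed
    have dj4: "dist ((f^^j) u) ((f^^j) z0) \<le> c + 2*R" if "j \<le> M" for j
    proof -
      have "dist ((f^^j) u) ((f^^j) z0) \<le> dist ((f^^j) u) ((f^^j) v) + dist ((f^^j) z0) ((f^^j) v)"
        by (rule dist_triangle_le[of _ "(f^^j) v"]) (simp add: dist_commute)
      moreover have "j \<le> 2*M" using that by simp
      ultimately show ?thesis using H dj3[OF that] by fastforce
    qed
    have dj4l: "\<forall>i\<le>M. dist ((f^^i) u) ((f^^i) z0) < \<epsilon>"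
    proof (intro allI impI)
      fix i assume "i \<le> M" then show "dist ((f^^i) u) ((f^^i) z0) < \<epsilon>" using dj4[of i] c Re by linarith
    qed
    have "(f^^M) (br u z0) = br a z" using equivm[OF uX z0X dj4l] z0 by (simp add: a_def)
    also have "\<dots> = (f^^M) z0" using zs z0 by simp
    finally have fz: "(f^^M) (br u z0) = (f^^M) z0" .
    have duz: "dist u z0 < \<epsilon>" using dj4l by auto
    have "br u z0 = z0" using fp_inj[OF brX'[OF uX z0X duz] z0X fz] .
    then have "dist a z \<le> lam^M * dist u z0" using Sm[OF uX z0X _ duz, of M] z0 by (simp add: a_def)
    also have "\<dots> \<le> lam^M * (3*R)" using dj4[of 0] c by (intro mult_left_mono[OF _ ge0]) simp
    finally have "dist a z \<le> lam^M * (3*R)" .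
    then have "dist a b \<le> lam^M * (3*R) + lam^M * (2*R)" using dzb2 dist_triangle[of a b z] by linarith
    also have "\<dots> = lam^M * (5*R)" by (simp add: algebra_simps)
    also have "\<dots> \<le> lam^M * \<epsilon>" using Re by (intro mult_left_mono[OF _ ge0]) simp
    finally show "dist ((f^^M) u) ((f^^M) v) \<le> \<epsilon> * lam^M" by (simp add: a_def b_def mult.commute)
  qed
qed


lemma fp_shift: "j \<le> M \<Longrightarrow> (f^^(M-j)) ((f^^j) p) = (f^^M) p"
proof -
  assume "j \<le> M"
  then have "(f^^M) p = (f^^((M-j)+j)) p" by simp
  also have "\<dots> = (f^^(M-j)) ((f^^j) p)" by (simp only: funpow_add o_apply)
  finally show ?thesis by simp
qed

lemma fp_comp: "(f^^a) ((f^^b) p) = (f^^(a+b)) p"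
  by (simp only: funpow_add o_apply)

lemma shadow:
  assumes R0: "R > 0" and R3: "3*R < \<epsilon>" and eta: "\<eta> > 0" "\<eta> < \<epsilon>" "\<eta> \<le> R"
    and md: "\<forall>a\<in>X. \<forall>b\<in>X. dist a b \<le> \<eta> \<longrightarrow> dist (br a b) a \<le> R"
    and N1: "lam^N * R \<le> \<eta>/2" and N2: "lam^N \<le> 1/3"
    and xsX: "\<And>k. xs k \<in> X" and xsd: "\<And>k. dist ((f^^N) (xs k)) (xs (Suc k)) \<le> \<eta>/2"
  shows "\<exists>y\<in>X. \<forall>k<K. \<forall>i\<le>N. dist ((f^^(k*N+i)) y) ((f^^i) (xs k)) \<le> 4*R"
proof -
  define zs where "zs = rec_nat (xs 0) (\<lambda>k z. br (xs (Suc k)) ((f^^N) z))"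
  have zs0: "zs 0 = xs 0" by (simp add: zs_def)
  have zsS: "zs (Suc k) = br (xs (Suc k)) ((f^^N) (zs k))" for k by (simp add: zs_def)
  have Re: "R < \<epsilon>" "2*R < \<epsilon>" using R3 R0 by auto
  have inv: "zs k \<in> X \<and> br (xs k) (zs k) = zs k \<and> dist (xs k) (zs k) \<le> R" for k
  proof (induction k)
    case 0 then show ?case using zs0 xsX brxx R0 by simp
  next
    case (Suc k)
    let ?w = "(f^^N) (zs k)"
    have wX: "?w \<in> X" using fpX Suc by simp
    have dk: "dist (xs k) (zs k) < \<epsilon>" using Suc Re by simp
    have "dist ((f^^N) (xs k)) ?w \<le> lam^N * dist (xs k) (zs k)" using Sm[OF xsX _ _ dk, of N] Suc by simp
    also have "\<dots> \<le> lam^N * R" using Suc by (intro mult_left_mono[OF _ ge0]) simp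
    finally have d1: "dist ((f^^N) (xs k)) ?w \<le> \<eta>/2" using N1 by simp
    have "dist (xs (Suc k)) ?w \<le> dist ((f^^N) (xs k)) (xs (Suc k)) + dist ((f^^N) (xs k)) ?w"
      by (rule dist_triangle3)
    then have d2: "dist (xs (Suc k)) ?w \<le> \<eta>" using d1 xsd[of k] by simp
    have zX: "zs (Suc k) \<in> X" using zsS brX'[OF xsX wX] d2 eta by simp
    have dz: "dist (zs (Suc k)) (xs (Suc k)) \<le> R" using md xsX wX d2 zsS by simp
    have "br (xs (Suc k)) (br (xs (Suc k)) ?w) = br (xs (Suc k)) ?w"
      using bb1[OF xsX wX] d2 eta dz zsS Re by (simp add: dist_commute)
    then show ?case using zX dz zsS by (simp add: dist_commute)
  qed
  have uz: "br (zs (Suc k)) ((f^^N) (zs k)) = zs (Suc k) \<and> dist (zs (Suc k)) ((f^^N) (zs k)) \<le> 2*R" for k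
  proof -
    let ?w = "(f^^N) (zs k)"
    have wX: "?w \<in> X" using fpX inv by simp
    have dk: "dist (xs k) (zs k) < \<epsilon>" using inv[of k] Re by simp
    have "dist ((f^^N) (xs k)) ?w \<le> lam^N * dist (xs k) (zs k)" using Sm[OF xsX _ _ dk, of N] inv by simp
    also have "\<dots> \<le> lam^N * R" using inv by (intro mult_left_mono[OF _ ge0]) simp
    finally have d1: "dist ((f^^N) (xs k)) ?w \<le> \<eta>/2" using N1 by simp
    have "dist (xs (Suc k)) ?w \<le> dist ((f^^N) (xs k)) (xs (Suc k)) + dist ((f^^N) (xs k)) ?w"
      by (rule dist_triangle3)
    then have d2: "dist (xs (Suc k)) ?w \<le> \<eta>" using d1 xsd[of k] by simp
    have dz: "dist (zs (Suc k)) (xs (Suc k)) \<le> R" using inv[of "Suc k"] by (simp add: dist_commute)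
    have "dist (zs (Suc k)) ?w \<le> dist (zs (Suc k)) (xs (Suc k)) + dist (xs (Suc k)) ?w"
      by (rule dist_triangle)
    then have d3: "dist (zs (Suc k)) ?w \<le> 2*R" using dz d2 eta by simp
    have "br (br (xs (Suc k)) ?w) ?w = br (xs (Suc k)) ?w"
      using bb2[OF xsX wX] d2 eta d3 zsS Re by simp
    then show ?thesis using zsS d3 by simp
  qed
  obtain y where yX: "y \<in> X" and yK: "(f^^(K*N)) y = zs K" using fp_surj inv by blast
  define Y where "Y k = (f^^(k*N)) y" for k
  have YX: "Y k \<in> X" for k using fpX yX by (simp add: Y_def)
  have YS: "(f^^N) (Y k) = Y (Suc k)" for k by (simp add: Y_def fp_comp add.commute)
  have step: "\<forall>i\<le>N. br ((f^^i) (Y k)) ((f^^i) (zs k)) = (f^^i) (Y k) \<and>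
        dist ((f^^i) (Y k)) ((f^^i) (zs k)) \<le> lam^(N-i) * (3*R)"
    if h1: "br (Y (Suc k)) (zs (Suc k)) = Y (Suc k)" and h2: "dist (Y (Suc k)) (zs (Suc k)) \<le> R" for k
  proof (intro allI impI)
    fix i assume iN: "i \<le> N"
    let ?w = "(f^^N) (zs k)"
    have wX: "?w \<in> X" using fpX inv by simp
    have zX: "zs (Suc k) \<in> X" using inv by simp
    have "dist (Y (Suc k)) ?w \<le> dist (Y (Suc k)) (zs (Suc k)) + dist (zs (Suc k)) ?w" by (rule dist_triangle)
    then have d3: "dist (Y (Suc k)) ?w \<le> 3*R" using h2 uz[of k] by simp
    have u1: "br (Y (Suc k)) ?w = Y (Suc k)"
      using utrans[OF YX zX wX h1] uz[of k] h2 d3 Re R3 by simp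
    have q1: "(f^^(N-i)) ((f^^i) (Y k)) = Y (Suc k)" using fp_shift[OF iN] YS by simp
    have q2: "(f^^(N-i)) ((f^^i) (zs k)) = ?w" using fp_shift[OF iN] by simp
    have "br ((f^^i) (Y k)) ((f^^i) (zs k)) = (f^^i) (Y k) \<and>
        dist ((f^^i) (Y k)) ((f^^i) (zs k)) \<le> lam^(N-i) * dist (Y (Suc k)) ?w"
      using Um[of "(f^^i) (Y k)" "(f^^i) (zs k)" "N-i"] fpX YX inv q1 q2 u1 d3 R3 by simp
    moreover have "lam^(N-i) * dist (Y (Suc k)) ?w \<le> lam^(N-i) * (3*R)"
      using d3 by (intro mult_left_mono[OF _ ge0])
    ultimately show "br ((f^^i) (Y k)) ((f^^i) (zs k)) = (f^^i) (Y k) \<and>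
        dist ((f^^i) (Y k)) ((f^^i) (zs k)) \<le> lam^(N-i) * (3*R)" by linarith
  qed
  have down: "j \<le> K \<longrightarrow> br (Y (K-j)) (zs (K-j)) = Y (K-j) \<and> dist (Y (K-j)) (zs (K-j)) \<le> R" for j
  proof (induction j)
    case 0 then show ?case using yK inv brxx R0 by (simp add: Y_def)
  next
    case (Suc j)
    show ?case
    proof
      assume "Suc j \<le> K"
      then have e: "Suc (K - Suc j) = K - j" by simp
      have "br (Y (Suc (K - Suc j))) (zs (Suc (K - Suc j))) = Y (Suc (K - Suc j)) \<and>
          dist (Y (Suc (K - Suc j))) (zs (Suc (K - Suc j))) \<le> R"
        using Suc \<open>Suc j \<le> K\<close> e by simp
      then have "br (Y (K - Suc j)) (zs (K - Suc j)) = Y (K - Suc j) \<and>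
          dist (Y (K - Suc j)) (zs (K - Suc j)) \<le> lam^N * (3*R)"
        using step[of "K - Suc j"] by auto
      moreover have "lam^N * (3*R) \<le> R" using N2 R0 by (simp add: mult_right_mono[of _ "1/3" "3*R", simplified])
      ultimately show "br (Y (K - Suc j)) (zs (K - Suc j)) = Y (K - Suc j) \<and>
          dist (Y (K - Suc j)) (zs (K - Suc j)) \<le> R" by linarith
    qed
  qed
  show ?thesis
  proof (intro bexI[OF _ yX] allI impI)
    fix k i assume kK: "k < K" and iN: "i \<le> N"
    have "Suc k \<le> K" using kK by simp
    then have "br (Y (Suc k)) (zs (Suc k)) = Y (Suc k) \<and> dist (Y (Suc k)) (zs (Suc k)) \<le> R"
      using down[of "K - Suc k"] by simp
    then have "dist ((f^^i) (Y k)) ((f^^i) (zs k)) \<le> lam^(N-i) * (3*R)" using step[of k] iN by auto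
    also have "\<dots> \<le> 1 * (3*R)" by (rule mult_right_mono[OF le1]) (use R0 in simp)
    finally have a1: "dist ((f^^i) (Y k)) ((f^^i) (zs k)) \<le> 3*R" by simp
    have dk: "dist (xs k) (zs k) < \<epsilon>" using inv[of k] Re by simp
    have "dist ((f^^i) (xs k)) ((f^^i) (zs k)) \<le> lam^i * dist (xs k) (zs k)"
      using Sm[OF xsX _ _ dk, of i] inv by simp
    also have "\<dots> \<le> 1 * R" using inv[of k] by (intro mult_mono le1) auto
    finally have a2: "dist ((f^^i) (xs k)) ((f^^i) (zs k)) \<le> R" by simp
    have "(f^^(k*N+i)) y = (f^^i) (Y k)" by (simp add: Y_def fp_comp add.commute)
    moreover have "dist ((f^^i) (Y k)) ((f^^i) (xs k)) \<le> dist ((f^^i) (Y k)) ((f^^i) (zs k)) + dist ((f^^i) (xs k)) ((f^^i) (zs k))"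
      by (rule dist_triangle_le[of _ "(f^^i) (zs k)"]) (simp add: dist_commute)
    ultimately show "dist ((f^^(k*N+i)) y) ((f^^i) (xs k)) \<le> 4*R" using a1 a2 by simp
  qed
qed


lemma compact_close: fixes s :: "nat \<Rightarrow> 'a" shows "(\<And>k. s k \<in> X) \<Longrightarrow> e > 0 \<Longrightarrow> \<exists>i j. i < j \<and> dist (s i) (s j) < e"
proof -
  assume sX: "\<And>k. s k \<in> X" and e: "e > 0"
  have "seq_compact X" using cX by (rule compact_imp_seq_compact)
  then obtain l and r :: "nat \<Rightarrow> nat" where "strict_mono r" "(s \<circ> r) \<longlonglongrightarrow> l" using sX unfolding seq_compact_def by blast
  then have "Cauchy (s \<circ> r)" by (simp add: LIMSEQ_imp_Cauchy)
  then obtain M where "\<forall>m\<ge>M. \<forall>n\<ge>M. dist ((s \<circ> r) m) ((s \<circ> r) n) < e" using metric_CauchyD e by blast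
  then have "dist (s (r M)) (s (r (Suc M))) < e" by simp
  moreover have "r M < r (Suc M)" using \<open>strict_mono r\<close> by (simp add: strict_mono_def)
  ultimately show ?thesis by blast
qed

lemma ucit: "c > 0 \<Longrightarrow> \<exists>\<gamma>>0. \<forall>a\<in>X. \<forall>b\<in>X. dist a b < \<gamma> \<longrightarrow> (\<forall>m<P. dist ((f^^m) a) ((f^^m) b) \<le> c)"
proof (induction P)
  case 0 then show ?case by (intro exI[of _ 1]) simp
next
  case (Suc P)
  then obtain \<gamma>1 where g1: "\<gamma>1 > 0" "\<forall>a\<in>X. \<forall>b\<in>X. dist a b < \<gamma>1 \<longrightarrow> (\<forall>m<P. dist ((f^^m) a) ((f^^m) b) \<le> c)"
    by blast
  have "uniformly_continuous_on X (f^^P)" using compact_uniformly_continuous[OF contfp cX] .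
  then have "\<exists>d>0. \<forall>x\<in>X. \<forall>x'\<in>X. dist x' x < d \<longrightarrow> dist ((f^^P) x') ((f^^P) x) < c"
    using Suc.prems unfolding uniformly_continuous_on_def by blast
  then obtain d where d: "d > 0" "\<forall>x\<in>X. \<forall>x'\<in>X. dist x' x < d \<longrightarrow> dist ((f^^P) x') ((f^^P) x) < c" by blast
  show ?case
  proof (intro exI[of _ "min \<gamma>1 d"] conjI ballI impI allI)
    show "min \<gamma>1 d > 0" using g1 d by simp
    fix a b m assume a: "a \<in> X" and b: "b \<in> X" and ab: "dist a b < min \<gamma>1 d" and m: "m < Suc P"
    show "dist ((f^^m) a) ((f^^m) b) \<le> c"
    proof (cases "m < P")
      case True then show ?thesis using g1 a b ab by simp
    next
      case False
      then have "m = P" using m by simp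
      moreover have "dist ((f^^P) a) ((f^^P) b) < c" using d a b ab by simp
      ultimately show ?thesis by simp
    qed
  qed
qed

lemma periodic: "\<exists>P>0. \<exists>p\<in>X. (f^^P) p = p"
proof -
  obtain c where c0: "c > 0" and E: "\<forall>u\<in>X. \<forall>v\<in>X. \<forall>M. (\<forall>m\<le>2*M. dist ((f^^m) u) ((f^^m) v) \<le> c)
    \<longrightarrow> dist ((f^^M) u) ((f^^M) v) \<le> \<epsilon> * lam^M" using expansive by blast
  define R where "R = min (c/8) (\<epsilon>/4)"
  have R0: "R > 0" and R3: "3*R < \<epsilon>" and R8: "8*R \<le> c" using c0 epos by (auto simp: R_def)
  obtain \<eta> where eta: "\<eta> > 0" "\<eta> < \<epsilon>" "\<eta> \<le> R" and md: "\<forall>a\<in>X. \<forall>b\<in>X. dist a b \<le> \<eta> \<longrightarrow> dist (br a b) a \<le> R"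
    using modulus[OF R0] by blast
  have "min (\<eta>/(2*R)) (1/3) > 0" using eta R0 by simp
  then obtain N where N: "lam^N < min (\<eta>/(2*R)) (1/3)" using real_arch_pow_inv l1 by blast
  have N2: "lam^N \<le> 1/3" using N by simp
  have "lam^N * R \<le> (\<eta>/(2*R)) * R" using N R0 by (intro mult_right_mono) auto
  then have N1: "lam^N * R \<le> \<eta>/2" using R0 by simp
  have Npos: "N > 0" using N2 by (cases N) auto
  obtain x0 where x0: "x0 \<in> X" using neX by blast
  have "\<exists>i j. i < j \<and> dist ((f^^(i*N)) x0) ((f^^(j*N)) x0) < \<eta>/2"
    using compact_close[of "\<lambda>k. (f^^(k*N)) x0" "\<eta>/2"] fpX x0 eta by simp
  then obtain i j where ij: "i < j" and dij: "dist ((f^^(i*N)) x0) ((f^^(j*N)) x0) < \<eta>/2" by blast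
  define n where "n = j - i"
  define x1 where "x1 = (f^^(i*N)) x0"
  have npos: "n > 0" using ij by (simp add: n_def)
  have x1X: "x1 \<in> X" using fpX x0 by (simp add: x1_def)
  have x1n: "(f^^(n*N)) x1 = (f^^(j*N)) x0"
  proof -
    have "n*N + i*N = j*N" using ij by (simp add: n_def algebra_simps)
    then show ?thesis by (simp add: x1_def fp_comp)
  qed
  have dx1: "dist ((f^^(n*N)) x1) x1 < \<eta>/2" using dij x1n by (simp add: x1_def dist_commute)
  define xs where "xs k = (f^^((k mod n)*N)) x1" for k
  have xsX: "xs k \<in> X" for k using fpX x1X by (simp add: xs_def)
  have xsd: "dist ((f^^N) (xs k)) (xs (Suc k)) \<le> \<eta>/2" for k
  proof -
    have e: "(f^^N) (xs k) = (f^^(Suc (k mod n) * N)) x1" by (simp add: xs_def fp_comp)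
    show ?thesis
    proof (cases "Suc (k mod n) = n")
      case True
      then have "xs (Suc k) = x1" by (simp add: xs_def mod_Suc)
      then show ?thesis using e True dx1 by simp
    next
      case False
      then have "xs (Suc k) = (f^^(Suc (k mod n) * N)) x1" by (simp add: xs_def mod_Suc)
      then show ?thesis using e eta by simp
    qed
  qed
  have xsn: "xs (k + n) = xs k" for k by (simp add: xs_def)
  define P where "P = n*N"
  have Ppos: "P > 0" using npos Npos by (simp add: P_def)
  have key: "\<exists>q\<in>X. dist q ((f^^P) q) \<le> \<epsilon> * lam^L" for L
  proof -
    define K where "K = 2*L*n + n + 1"
    obtain y where yX: "y \<in> X" and sh: "\<forall>k<K. \<forall>i\<le>N. dist ((f^^(k*N+i)) y) ((f^^i) (xs k)) \<le> 4*R"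
      using shadow[of R \<eta> N xs K, OF R0 R3 eta md N1 N2 xsX xsd] by blast
    define M where "M = L*P"
    have "\<forall>m\<le>2*M. dist ((f^^m) y) ((f^^m) ((f^^P) y)) \<le> c"
    proof (intro allI impI)
      fix m assume m: "m \<le> 2*M"
      define k where "k = m div N"
      define i where "i = m mod N"
      have mk: "m = k*N + i" by (simp add: k_def i_def)
      have iN: "i \<le> N" using Npos by (simp add: i_def less_imp_le)
      have "k*N \<le> m" using mk by simp
      also have "m \<le> (2*L*n)*N" using m by (simp add: M_def P_def algebra_simps)
      finally have "k*N \<le> (2*L*n)*N" .
      then have k2: "k \<le> 2*L*n" using Npos mult_le_cancel2 by blast
      have kK: "k < K" "k + n < K" using k2 by (auto simp: K_def)
      have e: "(f^^m) ((f^^P) y) = (f^^((k+n)*N + i)) y"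
        by (simp add: fp_comp mk P_def algebra_simps)
      have d1: "dist ((f^^m) y) ((f^^i) (xs k)) \<le> 4*R" using sh kK iN mk by simp
      have d2: "dist ((f^^((k+n)*N + i)) y) ((f^^i) (xs k)) \<le> 4*R" using sh[rule_format, of "k+n" i] kK iN xsn by simp
      have "dist ((f^^m) y) ((f^^m) ((f^^P) y)) \<le> dist ((f^^m) y) ((f^^i) (xs k)) + dist ((f^^((k+n)*N + i)) y) ((f^^i) (xs k))"
        using e by (simp add: dist_triangle_le[of _ "(f^^i) (xs k)"] dist_commute)
      then show "dist ((f^^m) y) ((f^^m) ((f^^P) y)) \<le> c" using d1 d2 R8 by linarith
    qed
    then have "dist ((f^^M) y) ((f^^M) ((f^^P) y)) \<le> \<epsilon> * lam^M" using E yX fpX by blast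
    moreover have "(f^^M) ((f^^P) y) = (f^^P) ((f^^M) y)" by (simp add: fp_comp add.commute)
    moreover have "lam^M \<le> lam^L"
    proof (rule power_decreasing)
      show "L \<le> M" using Ppos by (simp add: M_def)
    qed (use lpos l1 in auto)
    moreover have "\<epsilon> * lam^M \<le> \<epsilon> * lam^L" using epos \<open>lam^M \<le> lam^L\<close> by (intro mult_left_mono) auto
    ultimately have "dist ((f^^M) y) ((f^^P) ((f^^M) y)) \<le> \<epsilon> * lam^L" by (metis order_trans)
    then show ?thesis using fpX yX by blast
  qed
  show ?thesis
  proof (rule ccontr)
    assume nop: "\<not> ?thesis"
    have "continuous_on X (\<lambda>q. dist q ((f^^P) q))"
      by (intro continuous_on_dist continuous_on_id contfp)
    then obtain q0 where q0: "q0 \<in> X" and mn: "\<forall>q\<in>X. dist q0 ((f^^P) q0) \<le> dist q ((f^^P) q)"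
      using continuous_attains_inf[OF cX neX] by blast
    have "(f^^P) q0 \<noteq> q0" using nop Ppos q0 by blast
    then have pos: "dist q0 ((f^^P) q0) > 0" by (simp add: dist_commute)
    then obtain L where L: "lam^L < dist q0 ((f^^P) q0) / \<epsilon>" using real_arch_pow_inv l1 epos by (meson divide_pos_pos)
    obtain q where q: "q \<in> X" "dist q ((f^^P) q) \<le> \<epsilon> * lam^L" using key by blast
    have "\<epsilon> * lam^L < dist q0 ((f^^P) q0)" using L epos by (simp add: field_simps)
    then show False using q mn by fastforce
  qed
qed

end

lemma funpow_closed: "(\<And>x. x \<in> S \<Longrightarrow> h x \<in> S) \<Longrightarrow> x \<in> S \<Longrightarrow> (h^^k) x \<in> S"
  by (induction k) auto

lemma funpow_inj_on: "inj_on h S \<Longrightarrow> (\<And>x. x \<in> S \<Longrightarrow> h x \<in> S) \<Longrightarrow> x \<in> S \<Longrightarrow> y \<in> S \<Longrightarrow> (h^^k) x = (h^^k) y \<Longrightarrow> x = y"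
proof (induction k arbitrary: x y)
  case (Suc k)
  have "(h^^k) x \<in> S" "(h^^k) y \<in> S"
    using funpow_closed[of S h] Suc.prems by auto
  moreover have "h ((h ^^ k) x) = h ((h ^^ k) y)" using Suc.prems by simp
  ultimately have "(h ^^ k) x = (h ^^ k) y" using Suc.prems(1) unfolding inj_on_def by blast
  then show ?case using Suc.IH[of x y] Suc.prems by simp
qed simp

theorem proposition2p6:
  fixes G (structure)
    and X :: "'a::metric_space set" and \<phi> :: "'a \<Rightarrow> 'a" and act :: "'g \<Rightarrow> 'a \<Rightarrow> 'a"
  assumes "group G"
    and "g \<in> carrier G" and "group.ord G g = 0"
    and "smale_space X \<phi>"
    and "smale_action G X \<phi> act"
  shows "\<not> free_action G X act"
proof
  assume free: "free_action G X act"
  note sp = assms(4)[unfolded smale_space_def]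
  note sp3 = sp[THEN conjunct2, THEN conjunct2, THEN conjunct1]
  note sp4 = sp[THEN conjunct2, THEN conjunct2, THEN conjunct2]
  obtain \<psi> where hom: "homeomorphism X X \<phi> \<psi>" using sp3 by (elim exE)
  obtain \<epsilon> lam br where
    epos: "\<epsilon> > 0" and lpos: "0 < lam" and l1: "lam < 1"
    and brX: "\<forall>x\<in>X. \<forall>y\<in>X. dist x y < \<epsilon> \<longrightarrow> br x y \<in> X"
    and brc: "continuous_on {(x, y). x \<in> X \<and> y \<in> X \<and> dist x y < \<epsilon>} (\<lambda>p. br (fst p) (snd p))"
    and brxx: "\<forall>x\<in>X. br x x = x"
    and ax1: "\<forall>x\<in>X. \<forall>y\<in>X. \<forall>z\<in>X. dist y z < \<epsilon> \<and> dist x (br y z) < \<epsilon> \<and> dist x z < \<epsilon>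
              \<longrightarrow> br x (br y z) = br x z"
    and ax2: "\<forall>x\<in>X. \<forall>y\<in>X. \<forall>z\<in>X. dist x y < \<epsilon> \<and> dist (br x y) z < \<epsilon> \<and> dist x z < \<epsilon>
              \<longrightarrow> br (br x y) z = br x z"
    and ax3: "\<forall>x\<in>X. \<forall>y\<in>X. dist x y < \<epsilon> \<and> dist (\<phi> x) (\<phi> y) < \<epsilon>
              \<longrightarrow> \<phi> (br x y) = br (\<phi> x) (\<phi> y)"
    and ax4: "\<forall>x\<in>X. \<forall>y\<in>X. dist x y < \<epsilon> \<and> br x y = y
              \<longrightarrow> dist (\<phi> x) (\<phi> y) \<le> lam * dist x y"
    and ax5: "\<forall>x\<in>X. \<forall>y\<in>X. dist x y < \<epsilon> \<and> br x y = x
              \<longrightarrow> dist (inv_into X \<phi> x) (inv_into X \<phi> y) \<le> lam * dist x y"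
    using sp4 by (elim exE conjE) (rule that; assumption)
  have cX: "compact X" using sp by (rule conjunct1)
  have infX: "infinite X" using sp[THEN conjunct2] by (rule conjunct1)
  have neX: "X \<noteq> {}" using infX by auto
  have fXX: "\<phi> ` X = X" and contf: "continuous_on X \<phi>" and inv1: "\<forall>x\<in>X. \<psi> (\<phi> x) = x"
    using hom unfolding homeomorphism_def by auto
  have injf: "inj_on \<phi> X" using inv1 by (metis inj_on_inverseI)
  interpret S: sm X \<phi> \<epsilon> lam br
    using cX neX fXX injf contf epos lpos l1 brX brc brxx ax1 ax2 ax3 ax4 ax5 by (rule sm.intro)
  obtain P p where Ppos: "P > 0" and pX: "p \<in> X" and pP: "(\<phi>^^P) p = p" using S.periodic by blast
  note act = assms(5)[unfolded smale_action_def]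
  note act1 = act[THEN conjunct1]
  note act2 = act[THEN conjunct2, THEN conjunct1]
  note act3 = act[THEN conjunct2, THEN conjunct2, THEN conjunct1]
  note act4 = act[THEN conjunct2, THEN conjunct2, THEN conjunct2]
  define h where "h = act g"
  obtain h' where homh: "homeomorphism X X h h'" using act1 assms(2) unfolding h_def by (elim ballE exE) auto
  have hX: "x \<in> X \<Longrightarrow> h x \<in> X" for x using homh unfolding homeomorphism_def by auto
  have injh: "inj_on h X" using homh unfolding homeomorphism_def by (metis inj_on_inverseI)
  have hpX: "x \<in> X \<Longrightarrow> (h^^k) x \<in> X" for x k by (induction k) (auto simp: hX)
  have hcomm1: "x \<in> X \<Longrightarrow> h ((\<phi>^^m) x) = (\<phi>^^m) (h x)" for x m
  proof (induction m)
    case (Suc m)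
    have "h (\<phi> ((\<phi>^^m) x)) = \<phi> (h ((\<phi>^^m) x))" using act4 assms(2) S.fpX[OF Suc.prems] unfolding h_def by (elim ballE) auto
    then show ?case using Suc by simp
  qed simp
  have hcomm: "x \<in> X \<Longrightarrow> (h^^k) ((\<phi>^^m) x) = (\<phi>^^m) ((h^^k) x)" for x m k
  proof (induction k)
    case (Suc k)
    then show ?case using hcomm1 hpX by simp
  qed simp
  define q where "q k = (h^^k) p" for k
  have qX: "q k \<in> X" for k using hpX pX by (simp add: q_def)
  have qP: "(\<phi>^^P) (q k) = q k" for k using hcomm[OF pX, of k P] pP by (simp add: q_def)
  obtain c where c0: "c > 0" and E: "\<forall>u\<in>X. \<forall>v\<in>X. \<forall>M. (\<forall>m\<le>2*M. dist ((\<phi>^^m) u) ((\<phi>^^m) v) \<le> c)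
    \<longrightarrow> dist ((\<phi>^^M) u) ((\<phi>^^M) v) \<le> \<epsilon> * lam^M" using S.expansive by blast
  obtain \<gamma> where g0: "\<gamma> > 0" and G: "\<forall>a\<in>X. \<forall>b\<in>X. dist a b < \<gamma> \<longrightarrow> (\<forall>m<P. dist ((\<phi>^^m) a) ((\<phi>^^m) b) \<le> c)"
    using S.ucit[OF c0, of P] by blast
  obtain i j where ij: "i < j" and dij: "dist (q i) (q j) < \<gamma>" using S.compact_close[of q \<gamma>] qX g0 by blast
  have allm: "dist ((\<phi>^^m) (q i)) ((\<phi>^^m) (q j)) \<le> c" for m
  proof -
    have "(\<phi>^^m) (q i) = (\<phi>^^(m mod P)) (q i)" "(\<phi>^^m) (q j) = (\<phi>^^(m mod P)) (q j)"
      using funpow_mod_eq[OF qP] by simp_all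
    moreover have "m mod P < P" using Ppos by simp
    ultimately show ?thesis using G qX dij by simp
  qed
  have per: "(\<phi>^^(t*P)) (q k) = q k" for t k
    using funpow_mod_eq[OF qP, of "t*P"] by simp
  have bnd: "dist (q i) (q j) \<le> \<epsilon> * lam^t" for t
  proof -
    have "dist ((\<phi>^^(t*P)) (q i)) ((\<phi>^^(t*P)) (q j)) \<le> \<epsilon> * lam^(t*P)"
      using E qX allm by blast
    then have "dist (q i) (q j) \<le> \<epsilon> * lam^(t*P)" using per by simp
    moreover have "lam^(t*P) \<le> lam^t" using Ppos lpos l1 by (intro power_decreasing) auto
    moreover have "\<epsilon> * lam^(t*P) \<le> \<epsilon> * lam^t" using epos calculation(2) by (intro mult_left_mono) auto
    ultimately show ?thesis by linarith
  qed
  have qij: "q i = q j"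
  proof (rule ccontr)
    assume "q i \<noteq> q j"
    then have pos: "dist (q i) (q j) > 0" by simp
    then obtain t where t: "lam^t < dist (q i) (q j) / \<epsilon>" using real_arch_pow_inv l1 epos by (meson divide_pos_pos)
    then have "\<epsilon> * lam^t < dist (q i) (q j)" using epos by (simp add: field_simps)
    then show False using bnd[of t] by linarith
  qed
  have "q j = (h^^i) ((h^^(j-i)) p)"
  proof -
    have "j = i + (j - i)" using ij by simp
    then have "(h^^j) p = (h^^(i + (j-i))) p" by simp
    then show ?thesis by (simp only: q_def funpow_add o_apply)
  qed
  then have hp: "(h^^(j-i)) p = p"
    using funpow_inj_on[OF injh hX, of "(h^^(j-i)) p" p i] hpX pX qij by (simp add: q_def)
  interpret grp: group G by (rule assms(1))
  have actpow: "x \<in> X \<Longrightarrow> act (g [^] k) x = (h^^k) x" for x k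
  proof (induction k arbitrary: x)
    case 0 then show ?case using act2 by simp
  next
    case (Suc k)
    have "act (g [^] Suc k) x = act (g [^] k \<otimes> g) x" by simp
    also have "\<dots> = act (g [^] k) (act g x)" using act3 assms(2) Suc.prems grp.nat_pow_closed by simp
    also have "\<dots> = (h^^k) (h x)" using Suc.IH hX Suc.prems by (simp add: h_def)
    also have "\<dots> = (h^^Suc k) x" by (simp only: funpow_Suc_right o_apply)
    finally show ?case .
  qed
  have "act (g [^] (j-i)) p = p" using actpow[OF pX] hp by simp
  then have "g [^] (j-i) = \<one>" using free pX unfolding free_action_def by (simp add: assms(2))
  moreover have "j - i \<noteq> 0" using ij by simp
  ultimately show False using grp.ord_eq_0[OF assms(2)] assms(3) by blast
qed

end
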